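(* Let $N$ be a positive integer and let $x_1,\dots,x_N$ be real numbers with $0\le x_i\le 1$ for all $i$ and $\sum_{i=1}^N x_i=2$. Let $S$ be the sum of $x_ix_jx_k$ over all triples of indices $i<j<k$ such that $k-i$ is even and $j-i$ is odd. Then $S<1/3$. *)

theory Defs
  imports Main Complex_Main
begin

end

theory Submission
  imports Defs
begin

definition TS :: "nat \<Rightarrow> (nat \<times> nat \<times> nat) set" where
  "TS n = {(i, j, k). i \<in> {1..n} \<and> j \<in> {1..n} \<and> k \<in> {1..n} \<and>
            i < j \<and> j < k \<and> even (k - i) \<and> odd (j - i)}"
definition QS :: "nat \<Rightarrow> (nat \<times> nat) set" where
  "QS n = {(i, j). i \<in> {1..n} \<and> j \<in> {1..n} \<and> i < j \<and> odd (n - i) \<and> even (n - j)}"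
definition RS :: "nat \<Rightarrow> (nat \<times> nat) set" where
  "RS n = {(i, j). i \<in> {1..n} \<and> j \<in> {1..n} \<and> i < j \<and> even (n - i) \<and> odd (n - j)}"
definition AS :: "nat \<Rightarrow> nat set" where "AS n = {i \<in> {1..n}. even (n - i)}"
definition BS :: "nat \<Rightarrow> nat set" where "BS n = {i \<in> {1..n}. odd (n - i)}"

lemma fin_TS: "finite (TS n)"
  by (rule finite_subset[of _ "{1..n} \<times> {1..n} \<times> {1..n}"]) (auto simp: TS_def)
lemma fin_QS: "finite (QS n)"
  by (rule finite_subset[of _ "{1..n} \<times> {1..n}"]) (auto simp: QS_def)
lemma fin_RS: "finite (RS n)"
  by (rule finite_subset[of _ "{1..n} \<times> {1..n}"]) (auto simp: RS_def)

lemma TS_Suc: "TS (Suc n) = TS n \<union> (\<lambda>(i,j). (i,j,Suc n)) ` QS n"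
  unfolding TS_def QS_def
  by (auto simp: image_def; presburger)

lemma QS_Suc: "QS (Suc n) = RS n \<union> (\<lambda>i. (i, Suc n)) ` AS n"
  unfolding QS_def RS_def AS_def
  by (auto simp: image_def; presburger)

lemma RS_Suc: "RS (Suc n) = QS n"
  unfolding QS_def RS_def
  by (auto simp: image_def; presburger)

lemma AS_Suc: "AS (Suc n) = insert (Suc n) (BS n)"
  unfolding AS_def BS_def
  by (auto; presburger)

lemma BS_Suc: "BS (Suc n) = AS n"
  unfolding AS_def BS_def
  by (auto; presburger)

definition T :: "(nat \<Rightarrow> real) \<Rightarrow> nat \<Rightarrow> real" where
  "T x n = (\<Sum>(i, j, k) \<in> TS n. x i * x j * x k)"
definition Q :: "(nat \<Rightarrow> real) \<Rightarrow> nat \<Rightarrow> real" where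
  "Q x n = (\<Sum>(i, j) \<in> QS n. x i * x j)"
definition R :: "(nat \<Rightarrow> real) \<Rightarrow> nat \<Rightarrow> real" where
  "R x n = (\<Sum>(i, j) \<in> RS n. x i * x j)"
definition A :: "(nat \<Rightarrow> real) \<Rightarrow> nat \<Rightarrow> real" where
  "A x n = sum x (AS n)"
definition B :: "(nat \<Rightarrow> real) \<Rightarrow> nat \<Rightarrow> real" where
  "B x n = sum x (BS n)"

lemma T_Suc: "T x (Suc n) = T x n + x (Suc n) * Q x n"
proof -
  have d: "TS n \<inter> (\<lambda>(i,j). (i,j,Suc n)) ` QS n = {}"
    by (auto simp: TS_def)
  have inj: "inj_on (\<lambda>(i,j). (i,j,Suc n)) (QS n)"
    by (auto simp: inj_on_def)
  have "T x (Suc n) = T x n + (\<Sum>p \<in> (\<lambda>(i,j). (i,j,Suc n)) ` QS n. (case p of (i, j, k) \<Rightarrow> x i * x j * x k))"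
    unfolding T_def TS_Suc
    by (rule sum.union_disjoint) (auto simp: fin_TS fin_QS d)
  also have "(\<Sum>p \<in> (\<lambda>(i,j). (i,j,Suc n)) ` QS n. (case p of (i, j, k) \<Rightarrow> x i * x j * x k))
      = (\<Sum>(i,j) \<in> QS n. x i * x j * x (Suc n))"
    by (subst sum.reindex[OF inj]) (auto intro!: sum.cong)
  also have "\<dots> = x (Suc n) * Q x n"
    unfolding Q_def sum_distrib_left by (auto intro!: sum.cong)
  finally show ?thesis .
qed

lemma Q_Suc: "Q x (Suc n) = R x n + x (Suc n) * A x n"
proof -
  have d: "RS n \<inter> (\<lambda>i. (i, Suc n)) ` AS n = {}"
    by (auto simp: RS_def)
  have fA: "finite (AS n)" by (simp add: AS_def)
  have "Q x (Suc n) = R x n + (\<Sum>p \<in> (\<lambda>i. (i, Suc n)) ` AS n. (case p of (i, j) \<Rightarrow> x i * x j))"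
    unfolding Q_def R_def QS_Suc
    by (rule sum.union_disjoint) (auto simp: fin_RS fA d)
  also have "(\<Sum>p \<in> (\<lambda>i. (i, Suc n)) ` AS n. (case p of (i, j) \<Rightarrow> x i * x j)) = x (Suc n) * A x n"
    unfolding A_def sum_distrib_left
    by (subst sum.reindex) (auto simp: inj_on_def intro!: sum.cong)
  finally show ?thesis .
qed

lemma R_Suc: "R x (Suc n) = Q x n"
  by (simp add: R_def Q_def RS_Suc)

lemma A_Suc: "A x (Suc n) = x (Suc n) + B x n"
  unfolding A_def B_def AS_Suc
  by (rule sum.insert) (auto simp: BS_def)

lemma B_Suc: "B x (Suc n) = A x n"
  by (simp add: A_def B_def BS_Suc)

lemma zsets: "TS 0 = {}" "QS 0 = {}" "RS 0 = {}" "AS 0 = {}" "BS 0 = {}"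
  by (auto simp: TS_def QS_def RS_def AS_def BS_def)

lemma zeros: "T x 0 = 0" "Q x 0 = 0" "R x 0 = 0" "A x 0 = 0" "B x 0 = 0"
  by (auto simp: T_def Q_def R_def A_def B_def zsets)

lemma QR: "Q x n + R x n = A x n * B x n"
  by (induction n) (auto simp: zeros Q_Suc R_Suc A_Suc B_Suc algebra_simps)

lemma AB: "A x n + B x n = (\<Sum>i=1..n. x i)"
  by (induction n) (auto simp: zeros A_Suc B_Suc sum.cl_ivl_Suc)

lemma key:
  fixes a b q r t :: real
  assumes "a \<ge> 0" "b \<ge> 0" "t \<ge> 0" "q \<ge> 0" "r \<ge> 0" "q + r = a * b"
  shows "24 * t * q + 12 * (r + t * a - q)^2 / (a + b + t) + t^3
         \<le> (a + b + t)^3 - (a + b)^3 + 12 * (q - r)^2 / (a + b)"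
proof (cases "a + b = 0")
  case True
  then have "a = 0" "b = 0" using assms by auto
  then have "q = 0" "r = 0" using assms by auto
  then show ?thesis using \<open>a = 0\<close> \<open>b = 0\<close> by (cases "t = 0") (auto simp: power2_eq_square power3_eq_cube)
next
  case False
  define s where "s = a + b"
  have s: "s > 0" using False assms by (auto simp: s_def)
  have st: "s + t > 0" using s assms by auto
  have r: "r = a * b - q" using assms(6) by simp
  have poly: "((s + t)^3 - s^3 - 24 * t * q - t^3) * (s * (s + t)) + 12 * (q - r)^2 * (s + t)
       - 12 * (r + t * a - q)^2 * s = 3 * t * (s * ((a - b) - t) + 2 * (q - r))^2"
    unfolding r s_def by algebra
  have "((s + t)^3 - s^3 + 12 * (q - r)^2 / s - (24 * t * q + 12 * (r + t * a - q)^2 / (s + t) + t^3)) * (s * (s + t))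
        = ((s + t)^3 - s^3 - 24 * t * q - t^3) * (s * (s + t)) + 12 * (q - r)^2 / s * (s * (s + t))
           - 12 * (r + t * a - q)^2 / (s + t) * (s * (s + t))"
    by (simp add: algebra_simps)
  also have "\<dots> = ((s + t)^3 - s^3 - 24 * t * q - t^3) * (s * (s + t)) + 12 * (q - r)^2 * (s + t)
       - 12 * (r + t * a - q)^2 * s"
    using s st by simp
  also have "\<dots> = 3 * t * (s * ((a - b) - t) + 2 * (q - r))^2" by (rule poly)
  also have "\<dots> \<ge> 0" using assms by simp
  finally have "((s + t)^3 - s^3 + 12 * (q - r)^2 / s - (24 * t * q + 12 * (r + t * a - q)^2 / (s + t) + t^3)) \<ge> 0"
    using mult_pos_pos[OF s st] by (simp add: zero_le_mult_iff)
  then show ?thesis unfolding s_def by (simp add: add.assoc)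
qed


lemma inv:
  assumes nn: "\<And>i. i \<in> {1..N} \<Longrightarrow> 0 \<le> x i"
  shows "n \<le> N \<Longrightarrow> 24 * T x n + 12 * (Q x n - R x n)^2 / (A x n + B x n) + (\<Sum>i=1..n. x i ^ 3)
            \<le> (A x n + B x n)^3 \<and> A x n \<ge> 0 \<and> B x n \<ge> 0 \<and> Q x n \<ge> 0 \<and> R x n \<ge> 0"
proof (induction n)
  case 0
  then show ?case by (simp add: zeros)
next
  case (Suc n)
  then have IH: "24 * T x n + 12 * (Q x n - R x n)^2 / (A x n + B x n) + (\<Sum>i=1..n. x i ^ 3)
            \<le> (A x n + B x n)^3" and nn2: "A x n \<ge> 0" "B x n \<ge> 0" "Q x n \<ge> 0" "R x n \<ge> 0"
    by auto
  have t: "x (Suc n) \<ge> 0" using nn Suc.prems by auto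
  have k: "24 * x (Suc n) * Q x n + 12 * (R x n + x (Suc n) * A x n - Q x n)^2 / (A x n + B x n + x (Suc n)) + x (Suc n)^3
         \<le> (A x n + B x n + x (Suc n))^3 - (A x n + B x n)^3 + 12 * (Q x n - R x n)^2 / (A x n + B x n)"
    by (rule key) (use nn2 t QR in auto)
  have e: "A x (Suc n) + B x (Suc n) = A x n + B x n + x (Suc n)"
    by (simp add: A_Suc B_Suc)
  have "24 * T x (Suc n) + 12 * (Q x (Suc n) - R x (Suc n))^2 / (A x (Suc n) + B x (Suc n)) + (\<Sum>i=1..Suc n. x i ^ 3)
     = 24 * T x n + 24 * x (Suc n) * Q x n + 12 * (R x n + x (Suc n) * A x n - Q x n)^2 / (A x n + B x n + x (Suc n))
        + (\<Sum>i=1..n. x i ^ 3) + x (Suc n)^3"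
    unfolding e by (simp add: T_Suc Q_Suc R_Suc sum.cl_ivl_Suc algebra_simps)
  also have "\<dots> \<le> (A x (Suc n) + B x (Suc n))^3"
    unfolding e using IH k by linarith
  finally show ?case using nn2 t by (simp add: A_Suc B_Suc Q_Suc R_Suc)
qed

theorem lemma2:
  fixes N :: nat and x :: "nat \<Rightarrow> real"
  assumes "N \<ge> 1"
    and "\<And>i. i \<in> {1..N} \<Longrightarrow> 0 \<le> x i \<and> x i \<le> 1"
    and "(\<Sum>i=1..N. x i) = 2"
  shows "(\<Sum>(i, j, k) \<in> {(i, j, k). i \<in> {1..N} \<and> j \<in> {1..N} \<and> k \<in> {1..N} \<and>
            i < j \<and> j < k \<and> even (k - i) \<and> odd (j - i)}. x i * x j * x k) < 1 / 3"
proof -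
  have nn: "\<And>i. i \<in> {1..N} \<Longrightarrow> 0 \<le> x i" using assms(2) by auto
  have I: "24 * T x N + 12 * (Q x N - R x N)^2 / (A x N + B x N) + (\<Sum>i=1..N. x i ^ 3)
            \<le> (A x N + B x N)^3"
    using inv[OF nn, of N] by auto
  have s2: "A x N + B x N = 2" using AB assms(3) by simp
  have "\<exists>i\<in>{1..N}. x i > 0"
  proof (rule ccontr)
    assume "\<not> ?thesis"
    then have "\<And>i. i \<in> {1..N} \<Longrightarrow> x i \<le> 0" by (meson not_less)
    then have "(\<Sum>i=1..N. x i) \<le> 0" by (rule sum_nonpos) blast
    then show False using assms(3) by simp
  qed
  then obtain i where i: "i \<in> {1..N}" "x i > 0" by blast
  have "x i ^ 3 \<le> (\<Sum>i=1..N. x i ^ 3)"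
    by (rule member_le_sum) (use i nn in auto)
  moreover have "x i ^ 3 > 0" using i by simp
  moreover have "12 * (Q x N - R x N)^2 / (A x N + B x N) \<ge> 0" using s2 by simp
  moreover have "(A x N + B x N)^3 = 8" using s2 by simp
  ultimately have "24 * T x N < 8" using I by linarith
  then show ?thesis by (simp add: T_def TS_def)
qed

end
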